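(* Let $t$ be an integer with $m=2t+1\geq 11$, $n=2^m+1$ and $\delta_2=\frac{n-3}{6}$. If $x$ is an odd integer with $\delta_2+2\leq x\leq \delta_2+2^{2t-4}$, then $x$ is not a coset leader modulo $n$.
   Context: For $n=2^m+1$ and an integer $x$, the 2-cyclotomic coset of $x$ modulo $n$ is $C_x=\{x\cdot 2^{j} \bmod n : j\geq 0\}\subseteq\{0,1,\dots,n-1\}$. For $0\leq x\leq n-1$, "$x$ is a coset leader" means that $x$ is the smallest element of $C_x$. *)

theory Defs
  imports Main
begin

definition cyc_coset :: "nat \<Rightarrow> nat \<Rightarrow> nat set" where
  "cyc_coset n x = {x * 2 ^ j mod n | j. True}"

definition coset_leader :: "nat \<Rightarrow> nat \<Rightarrow> bool" where
  "coset_leader n x \<longleftrightarrow> x \<le> n - 1 \<and> (\<forall>y \<in> cyc_coset n x. x \<le> y)"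

end

theory Submission
  imports Defs
begin

lemma neg_mod:
  fixes a n r :: nat
  assumes "a mod n = r" "0 < r" "r < n"
  shows "a*(n-1) mod n = n - r"
proof -
  have rn: "r < n" using assms by auto
  have n0: "n > 0" using rn by auto
  define q where "q = a div n"
  have a: "a = r + n*q" using assms(1) unfolding q_def by (metis mod_mult_div_eq add.commute)
  have aq: "a \<ge> 1 + q" using a rn assms(2) n0
    by (metis add_le_mono le_add1 less_one mult_le_mono1 mult_1 not_less One_nat_def Suc_leI)
  obtain n' where nn: "n = Suc n'" using n0 by (cases n) auto
  define c where "c = a - 1 - q"
  have ac: "a = c + 1 + q" using aq unfolding c_def by simp
  have "a*(n-1) + a = a*n" unfolding nn by simp
  also have "\<dots> = n*c + n + n*q" unfolding ac by (simp add: algebra_simps)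
  finally have "a*(n-1) + r + n*q = n*c + n + n*q" using a by simp
  then have "a*(n-1) + r = n*c + n" by simp
  then have e: "a*(n-1) = (n - r) + n*c" using rn by simp
  have "((n - r) + n*c) mod n = n - r" using rn assms(2) by (metis mod_mult_self2 mod_less diff_less n0)
  then show ?thesis using e by simp
qed

lemma pow4_mod3: "(4::nat)^l mod 3 = 1"
  by (induction l) (auto simp: mod_mult_right_eq[symmetric])

lemma stay_small:
  fixes N n w L :: nat
  assumes "n = 3*N" "w < N"
    and "\<forall>l<L. \<not> (N \<le> 4*(4^l*w mod n) \<and> 4*(4^l*w mod n) < 3*N)"
  shows "4^L*w mod n < N"
  using assms(3)
proof (induction L)
  case 0 then show ?case using assms(1,2) by simp
next
  case (Suc L)
  define T where "T = 4^L*w mod n"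
  have T: "T < N" using Suc by (simp add: T_def)
  have ng: "\<not> (N \<le> 4*T \<and> 4*T < 3*N)" using Suc.prems T_def by auto
  have "4^(Suc L)*w mod n = 4*T mod n"
    unfolding T_def by (metis mod_mult_right_eq mult.assoc power_Suc)
  also have "\<dots> < N"
  proof (cases "4*T < N")
    case True then show ?thesis using assms(1) by simp
  next
    case False
    then have "3*N \<le> 4*T" using ng by auto
    moreover have "4*T - n < n" using T assms(1) by simp
    ultimately have "4*T mod n = 4*T - n" using assms(1)
      by (simp add: le_mod_geq)
    then show ?thesis using assms(1) T by simp
  qed
  finally show ?case .
qed

theorem lemma3p3:
  fixes t m n \<delta>2 x :: nat
  assumes "m = 2 * t + 1" and "m \<ge> 11"
    and "n = 2 ^ m + 1"
    and "\<delta>2 = (n - 3) div 6"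
    and "odd x"
    and "\<delta>2 + 2 \<le> x" and "x \<le> \<delta>2 + 2 ^ (2 * t - 4)"
  shows "\<not> coset_leader n x"
proof
  assume lead: "coset_leader n x"
  have mem: "x * 2^j mod n \<in> cyc_coset n x" for j by (auto simp: cyc_coset_def)
  have low: "x \<le> x * 2^j mod n" for j using lead mem[of j] unfolding coset_leader_def by blast
  have t5: "t \<ge> 5" using assms(1,2) by simp
  define P :: nat where "P = 2^(2*t-4)"
  have e4: "2*t = (2*t-4) + 4" using t5 by simp
  have "(2::nat)^(2*t) = 2^(2*t-4)*2^4" by (subst e4) (simp only: power_add)
  then have p4: "(4::nat)^t = 16*P" unfolding P_def by (simp add: power_mult)
  have pm: "(2::nat)^m = 32*P" using assms(1) p4 by (simp add: power_mult power_add)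
  have n: "n = 32*P + 1" using assms(3) pm by simp
  have "(16*P) mod 3 = 1" using pow4_mod3[of t] p4 by simp
  then obtain D where D: "16*P = 3*D + 1" by (metis mod_mult_div_eq add.commute)
  have d2: "\<delta>2 = D" using assms(4) n D by simp
  define N where "N = 2*D+1"
  have nN: "n = 3*N" using n D N_def by simp
  define w where "w = 2*x - N"
  have w3: "w \<ge> 3" and xw: "2*x = N + w" using assms(6) d2 N_def w_def by auto
  have wP: "w \<le> 2*P" using assms(7) d2 N_def w_def P_def by simp
  have wN: "w < N" using wP D N_def by simp
  have "\<exists>l<t+1. N \<le> 4*(4^l*w mod n) \<and> 4*(4^l*w mod n) < 3*N"
  proof (rule ccontr)
    assume "\<not> ?thesis"
    then have "4^(t+1)*w mod n < N" using stay_small[OF nN wN, of "t+1"] by blast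
    moreover have "4^(t+1)*w = (2*w)*(n-1)" using p4 n by simp
    moreover have "(2*w) mod n = 2*w" using wN nN by simp
    then have "(2*w)*(n-1) mod n = n - 2*w" by (rule neg_mod) (use wN nN w3 in auto)
    ultimately have "n - 2*w < N" by metis
    then show False using wN nN by simp
  qed
  then obtain l where gl: "N \<le> 4*(4^l*w mod n)" "4*(4^l*w mod n) < 3*N" by blast
  define T where "T = 4^l*w mod n"
  define M where "M = 4^l*w div n"
  have VT: "4^l*w = T + n*M" unfolding T_def M_def by simp
  have "(4::nat)^l mod 3 = 1" by (rule pow4_mod3)
  then obtain q where q: "(4::nat)^l = 3*q + 1" by (metis mod_mult_div_eq add.commute)
  have "x*2^(2*l+2) = 2*(2*x)*4^l" by (simp add: power_add power_mult)
  also have "\<dots> = 2*N*4^l + 2*(4^l*w)" unfolding xw by (simp add: algebra_simps)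
  also have "\<dots> = (2*N + 2*T) + n*(2*q + 2*M)"
  proof -
    have a1: "2*N*4^l = 2*N + n*(2*q)" unfolding q nN by (simp add: algebra_simps)
    have a2: "2*(4^l*w) = 2*T + n*(2*M)" unfolding VT by (simp add: algebra_simps)
    show ?thesis unfolding a1 a2 by (simp add: algebra_simps)
  qed
  finally have ex: "x*2^(2*l+2) mod n = (2*N + 2*T) mod n" by simp
  show False
  proof (cases "n \<le> 2*N + 2*T")
    case True
    then have "(2*N + 2*T) mod n = 2*N + 2*T - n" using gl nN T_def
      by (simp add: le_mod_geq)
    then have "x*2^(2*l+2) mod n < x" using ex gl nN T_def xw True by simp
    then show False using low[of "2*l+2"] by simp
  next
    case False
    have "x*2^(2*l+2+m) = x*2^(2*l+2)*(n-1)" using assms(3) by (simp add: power_add)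
    moreover have "x*2^(2*l+2)*(n-1) mod n = n - (2*N+2*T)"
      using neg_mod[OF ex] False nN by simp
    ultimately have e1: "x*2^(2*l+2+m) mod n = n - (2*N+2*T)" by metis
    have "n - (2*N+2*T) < x" using gl nN xw False w3 unfolding T_def[symmetric] by simp
    then have "x*2^(2*l+2+m) mod n < x" using e1 by simp
    then show False using low[of "2*l+2+m"] by simp
  qed
qed

end
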